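(* Let $D=0.5$ and let $p_0,p_1,\dots,p_{N_p}$ be the PWM basis functions on $[0,1]$ defined in the context. Then for every $k=1,\dots,N_p$ and every $\tau\in(0,0.5)$, $$-p_k(\tau)=p_k(\tau+0.5).$$
   Context: The PWM basis functions with duty cycle $D\in(0,1)$ are functions of the relative time $\tau\in[0,1]$, defined recursively as follows. Set $p_0(\tau)=1$ on $[0,1]$, and $$p_1(\tau)=\begin{cases}\sqrt3\,\dfrac{2\tau-D}{D}, & 0\le\tau\le D,\\[2mm] \sqrt3\,\dfrac{1+D-2\tau}{1-D}, & D\le\tau\le 1.\end{cases}$$ For $k\ge2$, define $p_k^\star(\tau)=\int_D^\tau p_{k-1}(\tau')\,d\tau'$, then $$\overline p_k(\tau)=p_k^\star(\tau)-\sum_{l=0}^{k-1}p_l(\tau)\int_0^1 p_l(s)\,p_k^\star(s)\,ds,\qquad p_k(\tau)=\frac{\overline p_k(\tau)}{\left(\int_0^1\overline p_k(s)^2\,ds\right)^{1/2}}$$ (Gram–Schmidt orthonormalization in $L^2([0,1])$). For $D=0.5$, $p_1(\tau)=\sqrt3(4\tau-1)$ on $[0,0.5)$ and $p_1(\tau)=\sqrt3(3-4\tau)$ on $[0.5,1]$. *)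

theory Defs
  imports "HOL-Analysis.Analysis"
begin

definition pwm_p1 :: "real \<Rightarrow> real \<Rightarrow> real" where
  "pwm_p1 D t = (if t \<le> D then sqrt 3 * (2 * t - D) / D
                 else sqrt 3 * (1 + D - 2 * t) / (1 - D))"

definition oint :: "real \<Rightarrow> real \<Rightarrow> (real \<Rightarrow> real) \<Rightarrow> real" where
  "oint a b f = (if a \<le> b then integral {a..b} f else - integral {b..a} f)"

text \<open>One Gram-Schmidt step: from the list [p_0,...,p_{k-1}] produce p_k.\<close>
definition pwm_step :: "real \<Rightarrow> (real \<Rightarrow> real) list \<Rightarrow> (real \<Rightarrow> real)" where
  "pwm_step D ps =
     (let pstar = (\<lambda>t. oint D t (last ps));
          pbar = (\<lambda>t. pstar t - (\<Sum>l\<leftarrow>ps. l t * integral {0..1} (\<lambda>s. l s * pstar s)));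
          nrm = sqrt (integral {0..1} (\<lambda>s. (pbar s)^2))
      in (\<lambda>t. pbar t / nrm))"

fun pwm_list :: "real \<Rightarrow> nat \<Rightarrow> (real \<Rightarrow> real) list" where
  "pwm_list D 0 = [\<lambda>t. 1]"
| "pwm_list D (Suc 0) = [\<lambda>t. 1, pwm_p1 D]"
| "pwm_list D (Suc (Suc k)) =
     (let ps = pwm_list D (Suc k) in ps @ [pwm_step D ps])"

definition pwm :: "real \<Rightarrow> nat \<Rightarrow> real \<Rightarrow> real" where
  "pwm D k = pwm_list D k ! k"

end

theory Submission
  imports Defs
begin

definition anti :: "(real \<Rightarrow> real) \<Rightarrow> bool" where
  "anti f \<longleftrightarrow> continuous_on {0..1} f \<and> (\<forall>t\<in>{0..1/2}. f (t + 1/2) = - f t)"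

lemma cint: "continuous_on {0..1} (g::real\<Rightarrow>real) \<Longrightarrow> 0 \<le> a \<Longrightarrow> b \<le> 1 \<Longrightarrow> g integrable_on {a..b}"
  by (rule integrable_continuous_real, erule continuous_on_subset) auto

lemma shift_int:
  assumes "continuous_on {0..1} (g::real\<Rightarrow>real)" "0 \<le> t" "t \<le> 1/2"
  shows "integral {1/2..t+1/2} g = integral {0..t} (\<lambda>s. g (s + 1/2))"
  using integral_shift_real_ivl[where f=g and a="1/2" and b="t+1/2" and c="1/2"] by simp

lemma int_half:
  assumes c: "continuous_on {0..1} (g::real\<Rightarrow>real)" and s: "\<And>t. t \<in> {0..1/2} \<Longrightarrow> g t + g (t + 1/2) = c"
  shows "integral {0..1} g = c / 2"
proof -
  have "integral {0..1} g = integral {0..1/2} g + integral {1/2..1} g"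
    using Henstock_Kurzweil_Integration.integral_combine[where a=0 and c="1/2" and b=1 and f=g] cint[OF c] by simp
  also have "integral {1/2..1} g = integral {0..1/2} (\<lambda>s. g (s + 1/2))"
    using shift_int[OF c, of "1/2"] by simp
  also have "integral {0..1/2} g + integral {0..1/2} (\<lambda>s. g (s + 1/2))
      = integral {0..1/2} (\<lambda>s. g s + g (s + 1/2))"
  proof (rule integral_add[symmetric])
    show "g integrable_on {0..1/2}" using cint[OF c] by simp
    have "continuous_on {0..1/2} (\<lambda>s. g (s + 1/2))"
      by (rule continuous_on_compose2[OF c]) (auto intro!: continuous_intros)
    then show "(\<lambda>s. g (s + 1/2)) integrable_on {0..1/2}"
      by (simp add: integrable_continuous_real)
  qed
  also have "\<dots> = integral {0..1/2::real} (\<lambda>s. c)"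
    by (rule integral_cong) (use s in auto)
  also have "\<dots> = c / 2" by simp
  finally show ?thesis .
qed

lemma anti_int: "anti f \<Longrightarrow> integral {0..1} f = 0"
  using int_half[of f 0] unfolding anti_def by auto

lemma p1_anti: "anti (pwm_p1 (1/2))"
  unfolding anti_def
proof
  have "continuous_on {0..1} (\<lambda>t::real. sqrt 3 * (1 - \<bar>4*t-2\<bar>))"
    by (auto intro!: continuous_intros)
  then show "continuous_on {0..1} (pwm_p1 (1/2))"
    by (rule continuous_on_cong[THEN iffD1, rotated -1]) (auto simp: pwm_p1_def)
  show "\<forall>t\<in>{0..1/2}. pwm_p1 (1/2) (t + 1/2) = - pwm_p1 (1/2) t"
    by (auto simp: pwm_p1_def field_simps)
qed

lemma sum_anti:
  assumes "\<forall>q\<in>set qs. anti q" "t \<in> {0..1/2}"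
  shows "(\<Sum>l\<leftarrow>qs. l (t+1/2) * J l) = - (\<Sum>l\<leftarrow>qs. l t * J l)"
  using assms by (induction qs) (auto simp: anti_def)

lemma sum_cont:
  assumes "\<forall>q\<in>set qs. anti q"
  shows "continuous_on {0..1} (\<lambda>t. \<Sum>l\<leftarrow>qs. l t * J l)"
  using assms by (induction qs) (auto simp: anti_def intro!: continuous_intros)

lemma step_generic:
  fixes pstar :: "real \<Rightarrow> real"
  assumes qs: "\<forall>q\<in>set qs. anti q"
    and pc: "continuous_on {0..1} pstar"
    and ps: "\<And>t. t \<in> {0..1/2} \<Longrightarrow> pstar t + pstar (t + 1/2) = c"
  shows "anti (\<lambda>t. (pstar t - (\<Sum>l\<leftarrow>(\<lambda>t. 1) # qs. l t * integral {0..1} (\<lambda>s. l s * pstar s))) / nrm)"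
proof -
  define J where "J l = integral {0..1} (\<lambda>s. l s * pstar s)" for l :: "real \<Rightarrow> real"
  have I0: "integral {0..1} pstar = c / 2" by (rule int_half[OF pc ps])
  have eq: "(\<lambda>t. (pstar t - (\<Sum>l\<leftarrow>(\<lambda>t. 1) # qs. l t * integral {0..1} (\<lambda>s. l s * pstar s))) / nrm)
     = (\<lambda>t. (pstar t - c/2 - (\<Sum>l\<leftarrow>qs. l t * J l)) / nrm)"
    by (simp add: J_def I0 diff_diff_eq)
  show ?thesis unfolding eq anti_def
  proof
    show "continuous_on {0..1} (\<lambda>t. (pstar t - c/2 - (\<Sum>l\<leftarrow>qs. l t * J l)) / nrm)"
      using pc sum_cont[OF qs, of J] unfolding divide_inverse by (auto intro!: continuous_intros)
    show "\<forall>t\<in>{0..1/2}. (pstar (t+1/2) - c/2 - (\<Sum>l\<leftarrow>qs. l (t+1/2) * J l)) / nrm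
         = - ((pstar t - c/2 - (\<Sum>l\<leftarrow>qs. l t * J l)) / nrm)"
    proof
      fix t :: real assume t: "t \<in> {0..1/2}"
      have e1: "pstar (t+1/2) = c - pstar t" using ps[OF t] by simp
      have e2: "(\<Sum>l\<leftarrow>qs. l (t+1/2) * J l) = - (\<Sum>l\<leftarrow>qs. l t * J l)" by (rule sum_anti[OF qs t])
      have e3: "(c - pstar t) - c/2 - (- (\<Sum>l\<leftarrow>qs. l t * J l)) = - (pstar t - c/2 - (\<Sum>l\<leftarrow>qs. l t * J l))" by simp
      show "(pstar (t+1/2) - c/2 - (\<Sum>l\<leftarrow>qs. l (t+1/2) * J l)) / nrm
         = - ((pstar t - c/2 - (\<Sum>l\<leftarrow>qs. l t * J l)) / nrm)"
        unfolding e1 e2 e3 by (simp only: minus_divide_left)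
    qed
  qed
qed

lemma oint_eq:
  assumes c: "continuous_on {0..1} (f::real\<Rightarrow>real)" and t: "t \<in> {0..1}"
  shows "oint (1/2) t f = integral {0..t} f - integral {0..1/2} f"
proof (cases "1/2 \<le> t")
  case True
  then show ?thesis
    using Henstock_Kurzweil_Integration.integral_combine[where a=0 and c="1/2" and b=t and f=f] cint[OF c, of 0 t] t
    by (simp add: oint_def)
next
  case False
  then show ?thesis
    using Henstock_Kurzweil_Integration.integral_combine[where a=0 and c=t and b="1/2" and f=f] cint[OF c, of 0 "1/2"] t
    by (simp add: oint_def)
qed

lemma step_anti:
  assumes qs: "\<forall>q\<in>set qs. anti q" and ne: "qs \<noteq> []"
  shows "anti (pwm_step (1/2) ((\<lambda>t. 1) # qs))"
proof -
  define f where "f = last qs"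
  have af: "anti f" using qs ne by (simp add: f_def)
  then have c: "continuous_on {0..1} f" and fa: "\<And>t. t\<in>{0..1/2} \<Longrightarrow> f (t + 1/2) = - f t"
    by (auto simp: anti_def)
  define F where "F x = integral {0..x} f" for x
  define pstar where "pstar t = oint (1/2) t f" for t :: real
  have pe: "pstar t = F t - F (1/2)" if "t \<in> {0..1}" for t
    using oint_eq[OF c that] by (simp add: pstar_def F_def)
  have Fc: "continuous_on {0..1} F"
    unfolding F_def by (rule indefinite_integral_continuous_1[OF cint[OF c]]) auto
  have pc: "continuous_on {0..1} pstar"
  proof -
    have "continuous_on {0..1} (\<lambda>t. F t - F (1/2))" using Fc by (auto intro!: continuous_intros)
    then show ?thesis using continuous_on_cong[of "{0..1}" "{0..1}" "\<lambda>t. F t - F (1/2)" pstar] pe by auto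
  qed
  have ps: "pstar t + pstar (t + 1/2) = - F (1/2)" if t: "t \<in> {0..1/2}" for t
  proof -
    have "F (t + 1/2) = F (1/2) + integral {1/2..t+1/2} f"
      using Henstock_Kurzweil_Integration.integral_combine[where a=0 and c="1/2" and b="t+1/2" and f=f] cint[OF c, of 0 "t+1/2"] t
      by (simp add: F_def)
    also have "integral {1/2..t+1/2} f = integral {0..t} (\<lambda>s. f (s + 1/2))"
      using shift_int[OF c, of t] t by simp
    also have "\<dots> = integral {0..t} (\<lambda>s. - f s)"
      by (rule integral_cong) (use fa t in auto)
    also have "\<dots> = - F t" by (simp add: F_def)
    finally show ?thesis using pe[of t] pe[of "t+1/2"] t by simp
  qed
  have "pstar = (\<lambda>t. oint (1/2) t (last ((\<lambda>t. 1) # qs)))"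
    using ne by (simp add: pstar_def f_def fun_eq_iff)
  then show ?thesis
    unfolding pwm_step_def Let_def
    using step_generic[OF qs pc ps] by simp
qed

lemma list_anti:
  "\<exists>qs. pwm_list (1/2) (Suc k) = (\<lambda>t. 1) # qs \<and> length qs = Suc k \<and> (\<forall>q\<in>set qs. anti q)"
proof (induction k)
  case 0
  then show ?case using p1_anti by (intro exI[of _ "[pwm_p1 (1/2)]"]) simp
next
  case (Suc k)
  then obtain qs where h: "pwm_list (1/2) (Suc k) = (\<lambda>t. 1) # qs" "length qs = Suc k" "\<forall>q\<in>set qs. anti q"
    by blast
  have "anti (pwm_step (1/2) ((\<lambda>t. 1) # qs))"
  proof -
    have "qs \<noteq> []" using h(2) by auto
    then show ?thesis using step_anti[OF h(3)] by blast
  qed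
  then show ?case
    using h by (intro exI[of _ "qs @ [pwm_step (1/2) ((\<lambda>t. 1) # qs)]"]) (simp add: Let_def)
qed

theorem theorem1:
  fixes k :: nat and \<tau> :: real
  assumes "1 \<le> k" and "0 < \<tau>" and "\<tau> < 1/2"
  shows "- pwm (1/2) k \<tau> = pwm (1/2) k (\<tau> + 1/2)"
proof -
  obtain m where k: "k = Suc m" using assms(1) by (cases k) auto
  obtain qs where h: "pwm_list (1/2) (Suc m) = (\<lambda>t. 1) # qs" "length qs = Suc m" "\<forall>q\<in>set qs. anti q"
    using list_anti by blast
  have "pwm (1/2) k = qs ! m" using h k by (simp add: pwm_def)
  moreover have "anti (qs ! m)" using h by auto
  ultimately show ?thesis using assms by (auto simp: anti_def)
qed

end
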